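(* Let $M$ be a randomized mechanism with discrete output distributions and let $D_0,D_1$ be worst-case neighboring inputs for $M$. Write $A=M(D_0)$, $B=M(D_1)$. Let $n\ge1$ and $\varepsilon>0$, and define for distributions $P,Q\in\{A,B\}$: $$\beta_\infty^{P,Q}=\Pr_{o\sim P}\big[\mathcal L_{P/Q}(o)=\infty\big],\qquad \Gamma_\lambda(P\|Q)=\log\sum_{o:\ \Pr[P=o]\neq0,\ \Pr[Q=o]\neq0}\Pr[P=o]\Big(\frac{\Pr[P=o]}{\Pr[Q=o]}\Big)^{\lambda},$$ $$\delta^{MA}_{P,Q}(\varepsilon)=\min_{\lambda>0}\Big(1-\big[1-\beta_\infty^{P,Q}\big]^n+e^{\,n\Gamma_\lambda(P\|Q)-\lambda\varepsilon}\Big).$$ Then the mechanism consisting of $n$ independent invocations of $M$ on the same input is $(\varepsilon,\delta)$-ADP with $\delta=\max\big(\delta^{MA}_{A,B}(\varepsilon),\delta^{MA}_{B,A}(\varepsilon)\big)$.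
   Context: Privacy loss: for output distributions $P,Q$ and output $o$, $\mathcal L_{P/Q}(o)=\infty$ if $\Pr[P=o]\ne0$ and $\Pr[Q=o]=0$; $\mathcal L_{P/Q}(o)=\ln(\Pr[P=o]/\Pr[Q=o])$ if both are nonzero; $-\infty$ otherwise. For neighboring $D,D'$ let $c(o)=\mathcal L_{M(D)/M(D')}(o)$, $\beta_\infty(D,D')=\Pr_{o\sim M(D)}[c(o)=\infty]$ and $\alpha(\lambda;D,D')=\log\mathbb E_{o\sim M(D)}[e^{\lambda c(o)}\mid c(o)\ne\pm\infty]$. Neighboring inputs $D_0,D_1$ are worst-case for $M$ if there is $k\in\{0,1\}$ such that for all $\lambda>0$ and all neighboring $D,D'$: $\alpha(\lambda;D_k,D_{1-k})\ge\alpha(\lambda;D,D')$ and $\beta_\infty(D_k,D_{1-k})\ge\beta_\infty(D,D')$. A mechanism $N$ is $(\varepsilon,\delta)$-ADP if for all output sets $S$ and all neighboring $D,D'$: $\Pr[N(D)\in S]\le e^\varepsilon\Pr[N(D')\in S]+\delta$. *)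

theory Defs
  imports "HOL-Probability.Probability"
begin

definition eln :: "ennreal \<Rightarrow> ereal" where
  "eln x = (if x = 0 then -\<infinity> else if x = \<top> then \<infinity> else ereal (ln (enn2real x)))"

fun eexp :: "ereal \<Rightarrow> ennreal" where
  "eexp (ereal r) = ennreal (exp r)"
| "eexp PInfty = \<top>"
| "eexp MInfty = 0"

definition privacy_loss :: "'o pmf \<Rightarrow> 'o pmf \<Rightarrow> 'o \<Rightarrow> ereal" where
  "privacy_loss P Q x =
     (if pmf P x \<noteq> 0 \<and> pmf Q x = 0 then \<infinity>
      else if pmf P x \<noteq> 0 \<and> pmf Q x \<noteq> 0 then ereal (ln (pmf P x / pmf Q x))
      else -\<infinity>)"

definition beta_inf :: "'o pmf \<Rightarrow> 'o pmf \<Rightarrow> real" where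
  "beta_inf P Q = measure_pmf.prob P {x. privacy_loss P Q x = \<infinity>}"

text \<open>alpha(lambda) = log E_{x ~ P}[exp(lambda c(x)) | c(x) finite]
  (conditional expectation = restricted expectation divided by the probability of the event).\<close>
definition alpha :: "real \<Rightarrow> 'o pmf \<Rightarrow> 'o pmf \<Rightarrow> ereal" where
  "alpha lam P Q =
     (let F = {x. privacy_loss P Q x \<noteq> \<infinity> \<and> privacy_loss P Q x \<noteq> -\<infinity>} in
      eln ((\<integral>\<^sup>+ x. indicator F x * ennreal (exp (lam * real_of_ereal (privacy_loss P Q x))) \<partial>measure_pmf P)
           / emeasure (measure_pmf P) F))"

definition worst_case :: "('d \<Rightarrow> 'd \<Rightarrow> bool) \<Rightarrow> ('d \<Rightarrow> 'o pmf) \<Rightarrow> 'd \<Rightarrow> 'd \<Rightarrow> bool" where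
  "worst_case neighbor M D0 D1 \<longleftrightarrow> neighbor D0 D1 \<and>
     (\<exists>k::nat \<in> {0,1}.
        let Dk = (if k = 0 then D0 else D1); Dk' = (if k = 0 then D1 else D0) in
        \<forall>lam>0. \<forall>D D'. neighbor D D' \<longrightarrow>
           alpha lam (M Dk) (M Dk') \<ge> alpha lam (M D) (M D') \<and>
           beta_inf (M Dk) (M Dk') \<ge> beta_inf (M D) (M D'))"

definition ADP :: "('d \<Rightarrow> 'd \<Rightarrow> bool) \<Rightarrow> ('d \<Rightarrow> 'r pmf) \<Rightarrow> real \<Rightarrow> ennreal \<Rightarrow> bool" where
  "ADP neighbor N eps delta \<longleftrightarrow>
     (\<forall>S D D'. neighbor D D' \<longrightarrow>
        ennreal (measure_pmf.prob (N D) S) \<le> ennreal (exp eps * measure_pmf.prob (N D') S) + delta)"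

definition Gamma :: "real \<Rightarrow> 'o pmf \<Rightarrow> 'o pmf \<Rightarrow> ereal" where
  "Gamma lam P Q = eln (\<integral>\<^sup>+ x \<in> {x. pmf P x \<noteq> 0 \<and> pmf Q x \<noteq> 0}.
       ennreal (pmf P x * (pmf P x / pmf Q x) powr lam) \<partial>count_space UNIV)"

definition delta_MA :: "nat \<Rightarrow> 'o pmf \<Rightarrow> 'o pmf \<Rightarrow> real \<Rightarrow> ennreal" where
  "delta_MA n P Q eps = (INF lam \<in> {0<..}.
      ennreal (1 - (1 - beta_inf P Q) ^ n) + eexp (ereal (real n) * Gamma lam P Q - ereal (lam * eps)))"

end

theory Submission
  imports Defs
begin


definition FF :: "'o pmf \<Rightarrow> 'o pmf \<Rightarrow> 'o set" where
  "FF P Q = {x. pmf P x \<noteq> 0 \<and> pmf Q x \<noteq> 0}"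

definition wr :: "'o pmf \<Rightarrow> 'o pmf \<Rightarrow> real \<Rightarrow> 'o \<Rightarrow> real" where
  "wr P Q lam x = (if x \<in> FF P Q then (pmf P x / pmf Q x) powr lam else 0)"

lemma wr_nonneg: "wr P Q lam x \<ge> 0" by (simp add: wr_def)

lemma prod_wr: "set xs \<subseteq> FF P Q \<Longrightarrow>
  prod_list (map (wr P Q lam) xs) = (prod_list (map (pmf P) xs) / prod_list (map (pmf Q) xs)) powr lam
  \<and> prod_list (map (pmf P) xs) > 0 \<and> prod_list (map (pmf Q) xs) > 0"
proof (induction xs)
  case Nil
  then show ?case by simp
next
  case (Cons x xs)
  then have x: "pmf P x > 0" "pmf Q x > 0" by (auto simp: FF_def order_less_le)
  from Cons have IH: "prod_list (map (wr P Q lam) xs) = (prod_list (map (pmf P) xs) / prod_list (map (pmf Q) xs)) powr lam"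
    "prod_list (map (pmf P) xs) > 0" "prod_list (map (pmf Q) xs) > 0" by auto
  have "wr P Q lam x = (pmf P x / pmf Q x) powr lam" using Cons.prems by (simp add: wr_def)
  then show ?case using IH x
    by (simp add: powr_mult[symmetric])
qed

lemma pointwise:
  assumes lam: "lam > 0"
  shows "prod_list (map (pmf P) xs) \<le> exp eps * prod_list (map (pmf Q) xs)
     + prod_list (map (pmf P) xs) * indicator (- lists (FF P Q)) xs
     + prod_list (map (pmf P) xs) * prod_list (map (wr P Q lam) xs) * exp (- lam * eps)"
proof -
  define p where "p = prod_list (map (pmf P) xs)"
  define q where "q = prod_list (map (pmf Q) xs)"
  have p0: "p \<ge> 0" unfolding p_def by (induction xs) auto
  have q0: "q \<ge> 0" unfolding q_def by (induction xs) auto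
  have w0: "prod_list (map (wr P Q lam) xs) \<ge> 0" by (induction xs) (auto simp: wr_nonneg)
  show ?thesis
  proof (cases "xs \<in> lists (FF P Q)")
    case False
    then show ?thesis using p0 q0 w0 unfolding p_def[symmetric] q_def[symmetric]
      by (simp add: mult_nonneg_nonneg)
  next
    case True
    then have h: "prod_list (map (wr P Q lam) xs) = (p/q) powr lam" "p > 0" "q > 0"
      using prod_wr[of xs P Q lam] unfolding p_def q_def by auto
    show ?thesis
    proof (cases "p \<le> exp eps * q")
      case True
      then show ?thesis using p0 w0 unfolding p_def[symmetric] q_def[symmetric]
        by (simp add: add_increasing2)
    next
      case False
      then have gt: "p / (q * exp eps) > 1" using h by (simp add: field_simps)
      have "(p/q) powr lam * exp (- lam * eps) = (p / (q * exp eps)) powr lam"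
        using h by (simp add: powr_divide powr_mult exp_minus powr_def exp_diff field_simps
          ln_mult ln_div exp_add ln_exp algebra_simps) 
      also have "\<dots> \<ge> 1" using gt lam by (simp add: ge_one_powr_ge_zero)
      finally have "p \<le> p * ((p/q) powr lam * exp (- lam * eps))" using h
        by (simp add: mult_le_cancel_left1)
      then show ?thesis using h q0 unfolding p_def[symmetric] q_def[symmetric]
        by (simp add: mult.assoc add_increasing)
    qed
  qed
qed

lemma pmf_rep: "pmf (replicate_pmf n P) xs = (if length xs = n then prod_list (map (pmf P) xs) else 0)"
proof (induction n arbitrary: xs)
  case 0
  then show ?case by (cases xs) (auto simp: indicator_def)
next
  case (Suc n)
  have eq: "replicate_pmf (Suc n) P = map_pmf (\<lambda>(x,ys). x#ys) (pair_pmf P (replicate_pmf n P))"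
    by (simp add: pair_pmf_def map_pmf_def bind_assoc_pmf bind_return_pmf)
  have inj: "inj (\<lambda>(x::'a,ys). x#ys)" by (auto simp: inj_def)
  show ?case
  proof (cases xs)
    case Nil
    then show ?thesis unfolding eq by (auto simp: pmf_map measure_pmf_zero_iff)
  next
    case (Cons y ys)
    have "pmf (replicate_pmf (Suc n) P) xs = pmf (pair_pmf P (replicate_pmf n P)) (y,ys)"
      unfolding eq Cons using pmf_map_inj'[OF inj, of _ "(y,ys)"] by simp
    then show ?thesis using Suc Cons by (simp add: pmf_pair)
  qed
qed
lemma rep_prod:
  fixes f :: "'a \<Rightarrow> real" assumes f: "\<And>x. f x \<ge> 0"
  shows "(\<integral>\<^sup>+ xs. ennreal (prod_list (map f xs)) \<partial>measure_pmf (replicate_pmf n P)) = (\<integral>\<^sup>+ x. ennreal (f x) \<partial>measure_pmf P) ^ n"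
proof (induction n)
  case 0
  then show ?case by simp
next
  case (Suc n)
  have nn: "prod_list (map f xs) \<ge> 0" for xs by (induction xs) (auto simp: f)
  have "(\<integral>\<^sup>+ xs. ennreal (prod_list (map f xs)) \<partial>measure_pmf (replicate_pmf (Suc n) P))
     = (\<integral>\<^sup>+ x. \<integral>\<^sup>+ ys. ennreal (f x) * ennreal (prod_list (map f ys)) \<partial>measure_pmf (replicate_pmf n P) \<partial>measure_pmf P)"
    by (simp add: ennreal_mult f nn)
  also have "\<dots> = (\<integral>\<^sup>+ x. ennreal (f x) * (\<integral>\<^sup>+ x. ennreal (f x) \<partial>measure_pmf P) ^ n \<partial>measure_pmf P)"
    by (simp add: nn_integral_cmult Suc)
  also have "\<dots> = (\<integral>\<^sup>+ x. ennreal (f x) \<partial>measure_pmf P) ^ Suc n"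
    by (simp add: nn_integral_multc mult.commute)
  finally show ?case .
qed

lemma prod_ind: "prod_list (map (indicator A) xs) = (indicator (lists A) xs :: real)"
  by (induction xs) (auto simp: indicator_def)

lemma core:
  assumes lam: "lam > 0"
  shows "ennreal (measure_pmf.prob (replicate_pmf n P) S) \<le>
     ennreal (exp eps * measure_pmf.prob (replicate_pmf n Q) S)
     + ennreal (1 - (measure_pmf.prob P (FF P Q))^n)
     + (\<integral>\<^sup>+ x. ennreal (wr P Q lam x) \<partial>measure_pmf P)^n * ennreal (exp (-lam*eps))"
proof -
  define Pn where "Pn = replicate_pmf n P"
  define Qn where "Qn = replicate_pmf n Q"
  define L where "L = lists (FF P Q)"
  define W where "W = (\<lambda>xs. prod_list (map (wr P Q lam) xs))"
  have W0: "W xs \<ge> 0" for xs unfolding W_def by (induction xs) (auto simp: wr_nonneg)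
  have pt: "ennreal (pmf Pn xs) * indicator S xs \<le>
      ennreal (exp eps) * (ennreal (pmf Qn xs) * indicator S xs)
      + ennreal (pmf Pn xs) * indicator (- L) xs
      + ennreal (pmf Pn xs) * ennreal (W xs) * ennreal (exp (-lam*eps))" for xs
  proof (cases "xs \<in> S \<and> length xs = n")
    case True
    have "pmf Pn xs \<le> exp eps * pmf Qn xs + pmf Pn xs * indicator (- L) xs
        + pmf Pn xs * W xs * exp (-lam*eps)"
      using pointwise[OF lam, of P xs eps Q] True unfolding Pn_def Qn_def L_def W_def pmf_rep
      by simp
    then have "ennreal (pmf Pn xs) \<le> ennreal (exp eps * pmf Qn xs + pmf Pn xs * indicator (- L) xs
        + pmf Pn xs * W xs * exp (-lam*eps))" by (rule ennreal_leI)
    also have "\<dots> = ennreal (exp eps) * ennreal (pmf Qn xs) + ennreal (pmf Pn xs) * indicator (- L) xs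
        + ennreal (pmf Pn xs) * ennreal (W xs) * ennreal (exp (-lam*eps))"
      using W0[of xs] by (simp add: ennreal_plus ennreal_mult' ennreal_mult'' ennreal_indicator
          mult_nonneg_nonneg del: ennreal_plus[symmetric])
    finally show ?thesis using True by (simp add: mult.assoc)
  next
    case False
    then have "xs \<notin> S \<or> pmf Pn xs = 0" unfolding Pn_def pmf_rep by auto
    then show ?thesis by auto
  qed
  have "ennreal (measure_pmf.prob Pn S) = (\<integral>\<^sup>+ xs. ennreal (pmf Pn xs) * indicator S xs \<partial>count_space UNIV)"
    by (simp add: measure_pmf.emeasure_eq_measure[symmetric] nn_integral_measure_pmf[symmetric])
  also have "\<dots> \<le> (\<integral>\<^sup>+ xs. ennreal (exp eps) * (ennreal (pmf Qn xs) * indicator S xs)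
      + ennreal (pmf Pn xs) * indicator (- L) xs
      + ennreal (pmf Pn xs) * ennreal (W xs) * ennreal (exp (-lam*eps)) \<partial>count_space UNIV)"
    by (rule nn_integral_mono) (rule pt)
  also have "\<dots> = ennreal (exp eps) * (\<integral>\<^sup>+ xs. ennreal (pmf Qn xs) * indicator S xs \<partial>count_space UNIV)
      + (\<integral>\<^sup>+ xs. ennreal (pmf Pn xs) * indicator (- L) xs \<partial>count_space UNIV)
      + (\<integral>\<^sup>+ xs. ennreal (pmf Pn xs) * ennreal (W xs) \<partial>count_space UNIV) * ennreal (exp (-lam*eps))"
    by (simp add: nn_integral_add nn_integral_cmult nn_integral_multc)
  also have "(\<integral>\<^sup>+ xs. ennreal (pmf Qn xs) * indicator S xs \<partial>count_space UNIV) = ennreal (measure_pmf.prob Qn S)"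
    by (simp add: measure_pmf.emeasure_eq_measure[symmetric] nn_integral_measure_pmf[symmetric])
  also have "(\<integral>\<^sup>+ xs. ennreal (pmf Pn xs) * indicator (- L) xs \<partial>count_space UNIV) = ennreal (measure_pmf.prob Pn (- L))"
    by (simp add: measure_pmf.emeasure_eq_measure[symmetric] nn_integral_measure_pmf[symmetric])
  also have "(\<integral>\<^sup>+ xs. ennreal (pmf Pn xs) * ennreal (W xs) \<partial>count_space UNIV) = (\<integral>\<^sup>+ x. ennreal (wr P Q lam x) \<partial>measure_pmf P)^n"
    unfolding nn_integral_measure_pmf[symmetric] W_def Pn_def by (rule rep_prod) (rule wr_nonneg)
  also have "measure_pmf.prob Pn (- L) = 1 - (measure_pmf.prob P (FF P Q))^n"
  proof -
    have "ennreal (measure_pmf.prob Pn L) = (\<integral>\<^sup>+ xs. ennreal (prod_list (map (indicator (FF P Q)) xs)) \<partial>measure_pmf Pn)"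
      by (simp add: prod_ind L_def measure_pmf.emeasure_eq_measure[symmetric] ennreal_indicator)
    also have "\<dots> = (\<integral>\<^sup>+ x. ennreal (indicator (FF P Q) x) \<partial>measure_pmf P)^n"
      unfolding Pn_def by (rule rep_prod) auto
    also have "\<dots> = ennreal ((measure_pmf.prob P (FF P Q))^n)"
      by (simp add: measure_pmf.emeasure_eq_measure ennreal_power ennreal_indicator)
    finally have "measure_pmf.prob Pn L = (measure_pmf.prob P (FF P Q))^n" by simp
    then show ?thesis using measure_pmf.finite_measure_Diff[of UNIV Pn L] by (simp add: Compl_eq_Diff_UNIV)
  qed
  finally show ?thesis unfolding Pn_def Qn_def by (simp add: ennreal_mult)
qed


lemma FF_alt: "{x. privacy_loss P Q x \<noteq> \<infinity> \<and> privacy_loss P Q x \<noteq> -\<infinity>} = FF P Q"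
  by (auto simp: privacy_loss_def FF_def)

lemma beta_eq: "beta_inf P Q = 1 - measure_pmf.prob P (FF P Q)"
proof -
  have e: "{x. privacy_loss P Q x = \<infinity>} = {x. pmf P x \<noteq> 0 \<and> pmf Q x = 0}"
    by (auto simp: privacy_loss_def)
  have "measure_pmf.prob P ({x. pmf P x \<noteq> 0 \<and> pmf Q x = 0} \<union> FF P Q) =
     measure_pmf.prob P {x. pmf P x \<noteq> 0 \<and> pmf Q x = 0} + measure_pmf.prob P (FF P Q)"
    by (rule measure_pmf.finite_measure_Union) (auto simp: FF_def)
  moreover have "{x. pmf P x \<noteq> 0 \<and> pmf Q x = 0} \<union> FF P Q = set_pmf P"
    by (auto simp: FF_def set_pmf_iff)
  moreover have "measure_pmf.prob P (set_pmf P) = 1" using measure_Int_set_pmf[of P UNIV] by simp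
  ultimately show ?thesis unfolding beta_inf_def e by simp
qed

lemma Gamma_eq: "Gamma lam P Q = eln (\<integral>\<^sup>+ x. ennreal (wr P Q lam x) \<partial>measure_pmf P)"
  unfolding Gamma_def nn_integral_measure_pmf
  by (rule arg_cong[where f=eln], rule nn_integral_cong)
     (auto simp: wr_def FF_def indicator_def ennreal_mult)

lemma alpha_eq: "alpha lam P Q = eln ((\<integral>\<^sup>+ x. ennreal (wr P Q lam x) \<partial>measure_pmf P) / ennreal (measure_pmf.prob P (FF P Q)))"
proof -
  have "(\<integral>\<^sup>+ x. indicator (FF P Q) x * ennreal (exp (lam * real_of_ereal (privacy_loss P Q x))) \<partial>measure_pmf P)
      = (\<integral>\<^sup>+ x. ennreal (wr P Q lam x) \<partial>measure_pmf P)"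
    by (rule nn_integral_cong) (auto simp: wr_def FF_def privacy_loss_def powr_def indicator_def)
  then show ?thesis unfolding alpha_def Let_def FF_alt by (simp add: measure_pmf.emeasure_eq_measure)
qed

lemma eln_mono_rev: "eln a \<le> eln b \<Longrightarrow> a \<le> b"
proof (cases "a = 0 \<or> b = \<top>")
  case False
  then have a0: "a \<noteq> 0" and bt: "b \<noteq> \<top>" by auto
  assume le: "eln a \<le> eln b"
  show ?thesis
  proof (cases "b = 0")
    case True
    then show ?thesis using le a0 by (auto simp: eln_def split: if_splits)
  next
    case b0: False
    show ?thesis
    proof (cases "a = \<top>")
      case True
      then show ?thesis using le bt b0 by (auto simp: eln_def)
    next
      case False
      then obtain x y where x: "a = ennreal x" "x > 0" and y: "b = ennreal y" "y > 0"
        using a0 b0 bt by (metis ennreal_cases ennreal_eq_0_iff not_le top_neq_ennreal)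
      then show ?thesis using le by (auto simp: eln_def)
    qed
  qed
qed auto

lemma eexp_minf: "eexp (-\<infinity>) = 0"
  by (metis eexp.simps(3) MInfty_eq_minfinity)

lemma eexp_pinf: "eexp \<infinity> = \<top>"
  by (metis eexp.simps(2) PInfty_eq_infinity)

lemma eexp_eq:
  assumes "n \<ge> 1"
  shows "eexp (ereal (real n) * eln g - ereal c) = g ^ n * ennreal (exp (-c))"
proof (cases "g = 0")
  case True
  then show ?thesis using assms by (simp add: eln_def eexp_minf)
next
  case g0: False
  show ?thesis
  proof (cases "g = \<top>")
    case True
    then show ?thesis using assms by (simp add: eln_def ennreal_top_mult power_eq_top_ennreal eexp_pinf)
  next
    case False
    then obtain r where r: "g = ennreal r" "r > 0" using g0
      by (metis ennreal_cases ennreal_eq_0_iff not_le)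
    have "exp (real n * ln r - c) = r ^ n * exp (-c)"
      using r by (simp add: exp_diff exp_minus field_simps ln_realpow[symmetric])
    then show ?thesis using r by (simp add: eln_def ennreal_power ennreal_mult)
  qed
qed




lemma div_mult_back: assumes "b > 0" shows "(G::ennreal) = (G / ennreal b) * ennreal b"
proof -
  have "(G / ennreal b) * ennreal b = G * (ennreal b / ennreal b)" by (rule ennreal_divide_times)
  moreover have "ennreal b / ennreal b = 1" using divide_ennreal[of b b] assms by simp
  ultimately show ?thesis by simp
qed

lemma comb:
  fixes X c G' Gk :: ennreal and b' bk e :: real
  assumes n: "n \<ge> 1" and X1: "X \<le> 1" and X: "X \<le> c + ennreal (1 - b'^n) + G'^n * ennreal e"
    and bk0: "0 \<le> bk" and bkb: "bk \<le> b'" and b1: "b' \<le> 1" and e: "e > 0"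
    and al: "eln (G' / ennreal b') \<le> eln (Gk / ennreal bk)"
  shows "X \<le> c + ennreal (1 - bk^n) + Gk^n * ennreal e"
proof (cases "bk = 0")
  case True
  have "X \<le> ennreal (1 - bk^n)" using X1 True n by (simp add: power_0_left)
  also have "\<dots> \<le> c + ennreal (1 - bk^n) + Gk^n * ennreal e" by (simp add: add_increasing)
  finally show ?thesis .
next
  case False
  then have bk: "bk > 0" using bk0 by auto
  then have b': "b' > 0" using bkb by auto
  have A: "G' / ennreal b' \<le> Gk / ennreal bk" using eln_mono_rev[OF al] .
  have G'eq: "G' = (G' / ennreal b') * ennreal b'" using div_mult_back[OF b'] .
  have Gkeq: "Gk = (Gk / ennreal bk) * ennreal bk" using div_mult_back[OF bk] .
  show ?thesis
  proof (cases "Gk / ennreal bk = \<top>")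
    case True
    have "Gk = \<top> * ennreal bk" using Gkeq[unfolded True] .
    then have "Gk = \<top>" using bk by (simp add: ennreal_top_mult)
    then have "Gk^n * ennreal e = \<top>" using n e by (simp add: power_eq_top_ennreal ennreal_top_mult)
    then show ?thesis by simp
  next
    case False
    then obtain ak where ak: "Gk / ennreal bk = ennreal ak" "ak \<ge> 0"
      by (metis ennreal_cases)
    have "G' / ennreal b' \<le> ennreal ak" using A unfolding ak(1) .
    then have "\<exists>q\<ge>0. G' / ennreal b' = ennreal q \<and> q \<le> ak"
      by (subst (asm) le_ennreal_iff[OF ak(2)])
    then obtain a' where a': "G' / ennreal b' = ennreal a'" "a' \<ge> 0" "a' \<le> ak"
      by (elim exE conjE) (rule that, assumption+)
    have "G' = ennreal a' * ennreal b'" using G'eq[unfolded a'(1)] .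
    then have G': "G' = ennreal (a' * b')" using a'(2) b' by (simp add: ennreal_mult)
    have "Gk = ennreal ak * ennreal bk" using Gkeq[unfolded ak(1)] .
    then have Gk: "Gk = ennreal (ak * bk)" using ak(2) bk by (simp add: ennreal_mult)
    have pb1: "b'^n \<le> 1" using b1 b' by (simp add: power_le_one)
    have pb2: "bk^n \<le> 1" using bkb b1 bk0 by (simp add: power_le_one)
    have pb3: "bk^n \<le> b'^n" using bkb bk0 by (rule power_mono)
    note pb = pb1 pb2 pb3
    have conv: "ennreal (1 - y^n) + ennreal (g)^n * ennreal e = ennreal (1 - y^n + g^n * e)"
      if "y^n \<le> 1" "g \<ge> 0" for y g
    proof -
      have "ennreal g ^ n * ennreal e = ennreal (g^n * e)"
        using that e by (simp add: ennreal_power ennreal_mult'')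
      moreover have "ennreal (1 - y^n) + ennreal (g^n * e) = ennreal (1 - y^n + g^n * e)"
        using that e by (intro ennreal_plus[symmetric]) auto
      ultimately show ?thesis by simp
    qed
    have X': "X \<le> c + ennreal (1 - b'^n + (a' * b')^n * e)"
      using X conv[of b' "a' * b'"] pb a' b' unfolding G' by (simp add: add.assoc)
    have R: "c + ennreal (1 - bk^n) + Gk^n * ennreal e = c + ennreal (1 - bk^n + (ak * bk)^n * e)"
      using conv[of bk "ak * bk"] pb ak bk unfolding Gk by (simp add: add.assoc)
    show ?thesis
    proof (cases "ak^n * e \<ge> 1")
      case True
      have "bk^n \<le> bk^n * (ak^n * e)" using True bk by (simp add: mult_le_cancel_left1)
      then have "1 \<le> 1 - bk^n + (ak * bk)^n * e" by (simp add: power_mult_distrib algebra_simps)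
      then have "X \<le> ennreal (1 - bk^n + (ak * bk)^n * e)" using X1 by (metis ennreal_1 ennreal_leI order_trans)
      also have "\<dots> \<le> c + ennreal (1 - bk^n + (ak * bk)^n * e)" by simp
      finally show ?thesis unfolding R .
    next
      case False
      have m: "a'^n * e \<le> ak^n * e" using a' e by (simp add: power_mono)
      have "bk^n * (1 - ak^n * e) \<le> b'^n * (1 - a'^n * e)"
        using False m pb bk b' by (intro mult_mono) auto
      then have "1 - b'^n + (a' * b')^n * e \<le> 1 - bk^n + (ak * bk)^n * e" by (simp add: power_mult_distrib algebra_simps)
      then have "ennreal (1 - b'^n + (a' * b')^n * e) \<le> ennreal (1 - bk^n + (ak * bk)^n * e)" by (rule ennreal_leI)
      then show ?thesis unfolding R using X' by (meson add_left_mono order_trans)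
    qed
  qed
qed


lemma INF_const_add_ennreal:
  fixes f :: "'a \<Rightarrow> ennreal"
  assumes "I \<noteq> {}"
  shows "c + (INF i\<in>I. f i) = (INF i\<in>I. c + f i)"
proof -
  have "c + Inf (f ` I) = (INF s\<in>f ` I. c + s)"
  proof (rule continuous_at_Inf_mono)
    show "mono ((+) c)" by (simp add: mono_def add_left_mono)
    show "continuous (at_right (Inf (f ` I))) ((+) c)"
      by (intro continuous_intros)
    show "f ` I \<noteq> {}" using assms by simp
    show "bdd_below (f ` I)" by simp
  qed
  then show ?thesis by (simp add: image_comp)
qed


theorem proposition1:
  fixes neighbor :: "'d \<Rightarrow> 'd \<Rightarrow> bool" and M :: "'d \<Rightarrow> 'o pmf"
    and D0 D1 :: 'd and n :: nat and eps :: real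
  assumes "worst_case neighbor M D0 D1"
    and "n \<ge> 1" and "eps > 0"
  shows "ADP neighbor (\<lambda>D. replicate_pmf n (M D)) eps
           (max (delta_MA n (M D0) (M D1) eps) (delta_MA n (M D1) (M D0) eps))"
proof -
  obtain P0 Q0 where pq: "(P0 = M D0 \<and> Q0 = M D1) \<or> (P0 = M D1 \<and> Q0 = M D0)"
    and wc: "\<And>lam D D'. lam > 0 \<Longrightarrow> neighbor D D' \<Longrightarrow>
        alpha lam (M D) (M D') \<le> alpha lam P0 Q0 \<and> beta_inf (M D) (M D') \<le> beta_inf P0 Q0"
  proof -
    from assms(1) obtain k :: nat where k: "k \<in> {0,1}" and
      h: "\<forall>lam>0. \<forall>D D'. neighbor D D' \<longrightarrow>
           alpha lam (M (if k = 0 then D0 else D1)) (M (if k = 0 then D1 else D0)) \<ge> alpha lam (M D) (M D') \<and>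
           beta_inf (M (if k = 0 then D0 else D1)) (M (if k = 0 then D1 else D0)) \<ge> beta_inf (M D) (M D')"
      unfolding worst_case_def Let_def by blast
    show ?thesis
      by (rule that[of "M (if k = 0 then D0 else D1)" "M (if k = 0 then D1 else D0)"]) (use h in auto)
  qed
  have dle: "delta_MA n P0 Q0 eps \<le> max (delta_MA n (M D0) (M D1) eps) (delta_MA n (M D1) (M D0) eps)"
    using pq by auto
  show ?thesis unfolding ADP_def
  proof (intro allI impI)
    fix S D D' assume nb: "neighbor D D'"
    define P where "P = M D"
    define Q where "Q = M D'"
    define X where "X = ennreal (measure_pmf.prob (replicate_pmf n P) S)"
    define c where "c = ennreal (exp eps * measure_pmf.prob (replicate_pmf n Q) S)"
    define f where "f = (\<lambda>lam. ennreal (1 - (1 - beta_inf P0 Q0) ^ n) +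
        eexp (ereal (real n) * Gamma lam P0 Q0 - ereal (lam * eps)))"
    have "X \<le> c + f lam" if lam: "lam > 0" for lam
    proof -
      have X1: "X \<le> 1" unfolding X_def by simp
      have Xc: "X \<le> c + ennreal (1 - (measure_pmf.prob P (FF P Q))^n)
         + (\<integral>\<^sup>+ x. ennreal (wr P Q lam x) \<partial>measure_pmf P)^n * ennreal (exp (-lam*eps))"
        unfolding X_def c_def by (rule core[OF lam])
      have w: "alpha lam P Q \<le> alpha lam P0 Q0" "beta_inf P Q \<le> beta_inf P0 Q0"
        using wc[OF lam nb] unfolding P_def Q_def by auto
      have "X \<le> c + ennreal (1 - (measure_pmf.prob P0 (FF P0 Q0))^n)
         + (\<integral>\<^sup>+ x. ennreal (wr P0 Q0 lam x) \<partial>measure_pmf P0)^n * ennreal (exp (-lam*eps))"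
      proof (rule comb[OF assms(2) X1 Xc])
        show "0 \<le> measure_pmf.prob P0 (FF P0 Q0)" by simp
        show "measure_pmf.prob P0 (FF P0 Q0) \<le> measure_pmf.prob P (FF P Q)"
          using w(2) by (simp add: beta_eq)
        show "measure_pmf.prob P (FF P Q) \<le> 1" by simp
        show "exp (-lam*eps) > 0" by simp
        show "eln ((\<integral>\<^sup>+ x. ennreal (wr P Q lam x) \<partial>measure_pmf P) / ennreal (measure_pmf.prob P (FF P Q)))
           \<le> eln ((\<integral>\<^sup>+ x. ennreal (wr P0 Q0 lam x) \<partial>measure_pmf P0) / ennreal (measure_pmf.prob P0 (FF P0 Q0)))"
          using w(1) by (simp add: alpha_eq)
      qed
      also have "\<dots> = c + f lam"
        unfolding f_def Gamma_eq eexp_eq[OF assms(2)] beta_eq by (simp add: add.assoc)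
      finally show ?thesis .
    qed
    then have "X \<le> (INF lam\<in>{0<..}. c + f lam)" by (intro INF_greatest) auto
    also have "\<dots> = c + delta_MA n P0 Q0 eps"
      unfolding delta_MA_def f_def[symmetric]
      by (rule INF_const_add_ennreal[symmetric]) auto
    also have "\<dots> \<le> c + max (delta_MA n (M D0) (M D1) eps) (delta_MA n (M D1) (M D0) eps)"
      using dle by (rule add_left_mono)
    finally show "ennreal (measure_pmf.prob (replicate_pmf n (M D)) S)
        \<le> ennreal (exp eps * measure_pmf.prob (replicate_pmf n (M D')) S) +
          max (delta_MA n (M D0) (M D1) eps) (delta_MA n (M D1) (M D0) eps)"
      unfolding X_def c_def P_def Q_def .
  qed
qed


end
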